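(* Let $\beta=\beta_1\cdots\beta_p$ be a finite word over $\{1,2\}$ and let $\theta=\theta_1\cdots\theta_{2r}$ ($r\ge 1$) be a finite word over $\{1,2\}$ of even length which is symmetric, i.e. $\theta_j=\theta_{2r+1-j}$ for all $j$. For infinite words $\omega_1=\omega_1(1)\omega_1(2)\cdots$ and $\omega_2=\omega_2(1)\omega_2(2)\cdots$ over $\{1,2\}$, let $\gamma=\gamma(\omega_1,\omega_2)\in\{1,2\}^{\mathbb{Z}}$ be the bi-infinite word $\omega_2^t\beta^t\,2\,\theta\,2\,\beta\,\omega_1$ (where ${}^t$ denotes reversal), indexed so that $\gamma_0=2$, $\gamma_j=\theta_j$ for $1\le j\le 2r$, $\gamma_{2r+1}=2$, $\gamma_{2r+1+j}=\beta_j$ for $1\le j\le p$, $\gamma_{2r+1+p+j}=\omega_1(j)$ for $j\ge1$, $\gamma_{-j}=\beta_j$ for $1\le j\le p$, and $\gamma_{-p-j}=\omega_2(j)$ for $j\ge 1$. Let $S$ be a set of infinite words over $\{1,2\}$ (for instance, those avoiding a given finite list of finite strings) such that for all $\omega_1,\omega_2\in S$ the Markov value $m(\gamma(\omega_1,\omega_2))=\sup_{n\in\mathbb{Z}}\lambda_n(\gamma(\omega_1,\omega_2))$ is attained at one of the two positions $0$ or $2r+1$ (the $2$'s adjacent to $\theta$), i.e. $m(\gamma)=\max\{\lambda_0(\gamma),\lambda_{2r+1}(\gamma)\}$. Then, among $\omega_1,\omega_2\in S$, the Markov value $m(\gamma(\omega_1,\omega_2))$ is minimal when $\omega_1=\omega_2=:\omega$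 and $[0;\beta,\omega]$ is minimal. Precisely: for all $\omega_1,\omega_2\in S$, $m(\gamma(\omega_1,\omega_2))\ge \max\{m(\gamma(\omega_1,\omega_1)),m(\gamma(\omega_2,\omega_2))\}$, and for $\omega,\omega'\in S$ with $[0;\beta,\omega]\le[0;\beta,\omega']$ one has $m(\gamma(\omega,\omega))\le m(\gamma(\omega',\omega'))$.
   Context: For $\underline{\alpha}=(\alpha_n)_{n\in\mathbb{Z}}\in\{1,2\}^{\mathbb{Z}}$ and $k\in\mathbb{Z}$, $\lambda_k(\underline{\alpha})=[\alpha_k;\alpha_{k+1},\alpha_{k+2},\dots]+[0;\alpha_{k-1},\alpha_{k-2},\dots]$, where $[b_0;b_1,b_2,\dots]=b_0+1/(b_1+1/(b_2+\cdots))$. For a finite word $\beta$ and infinite word $\omega$, $[0;\beta,\omega]$ denotes the continued fraction whose partial quotients are the letters of $\beta$ followed by those of $\omega$. *)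

theory Defs
  imports Complex_Main
begin

primrec cf_approx :: "nat \<Rightarrow> (nat \<Rightarrow> nat) \<Rightarrow> real" where
  "cf_approx 0 b = real (b 0)"
| "cf_approx (Suc n) b = real (b 0) + 1 / cf_approx n (\<lambda>k. b (Suc k))"

definition cf :: "(nat \<Rightarrow> nat) \<Rightarrow> real" where
  "cf b = lim (\<lambda>n. cf_approx n b)"

definition cf0 :: "(nat \<Rightarrow> nat) \<Rightarrow> real" where
  "cf0 a = cf (\<lambda>n. if n = 0 then 0 else a (n - 1))"

definition lam :: "int \<Rightarrow> (int \<Rightarrow> nat) \<Rightarrow> real" where
  "lam k \<alpha> = cf (\<lambda>n. \<alpha> (k + int n)) + cf0 (\<lambda>n. \<alpha> (k - 1 - int n))"

definition markov :: "(int \<Rightarrow> nat) \<Rightarrow> real" where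
  "markov \<alpha> = (SUP k. lam k \<alpha>)"

definition prepend :: "nat list \<Rightarrow> (nat \<Rightarrow> nat) \<Rightarrow> (nat \<Rightarrow> nat)" where
  "prepend xs \<omega> = (\<lambda>n. if n < length xs then xs ! n else \<omega> (n - length xs))"

text \<open>Infinite words are indexed from 0, i.e. omega(j) of the paper is omega (j-1).\<close>
definition gamma :: "nat list \<Rightarrow> nat list \<Rightarrow> (nat \<Rightarrow> nat) \<Rightarrow> (nat \<Rightarrow> nat) \<Rightarrow> (int \<Rightarrow> nat)" where
  "gamma \<beta> \<theta> \<omega>1 \<omega>2 = (\<lambda>j.
     let L = int (length \<theta>); p = int (length \<beta>) in
     if j = 0 then 2
     else if 1 \<le> j \<and> j \<le> L then \<theta> ! nat (j - 1)
     else if j = L + 1 then 2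
     else if L + 1 < j \<and> j \<le> L + 1 + p then \<beta> ! nat (j - L - 2)
     else if L + 1 + p < j then \<omega>1 (nat (j - L - 2 - p))
     else if - p \<le> j then \<beta> ! nat (- j - 1)
     else \<omega>2 (nat (- j - p - 1)))"

end

theory Submission
  imports Defs
begin


definition BB :: "(nat \<Rightarrow> nat) \<Rightarrow> bool" where
  "BB b \<longleftrightarrow> (\<forall>n. b n \<in> {1, 2})"

primrec Fs :: "nat \<Rightarrow> (nat \<Rightarrow> nat) \<Rightarrow> real \<Rightarrow> real" where
  "Fs 0 b y = y"
| "Fs (Suc n) b y = real (b 0) + 1 / Fs n (\<lambda>k. b (Suc k)) y"

lemma cf_approx_add: "cf_approx (n + m) b = Fs n b (cf_approx m (\<lambda>k. b (k + n)))"
  by (induction n arbitrary: b) simp_all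

lemma BB_shift: "BB b \<Longrightarrow> BB (\<lambda>k. b (k + n))" "BB b \<Longrightarrow> BB (\<lambda>k. b (Suc k))"
  by (auto simp: BB_def)

lemma Fs_bounds: "BB b \<Longrightarrow> 1 \<le> y \<Longrightarrow> y \<le> 3 \<Longrightarrow> 1 \<le> Fs n b y \<and> Fs n b y \<le> 3"
proof (induction n arbitrary: b)
  case 0 then show ?case by simp
next
  case (Suc n)
  have h: "1 \<le> Fs n (\<lambda>k. b (Suc k)) y \<and> Fs n (\<lambda>k. b (Suc k)) y \<le> 3"
    using Suc BB_shift(2) by blast
  have b0: "b 0 = 1 \<or> b 0 = 2" using Suc.prems by (auto simp: BB_def)
  have "1 / Fs n (\<lambda>k. b (Suc k)) y \<le> 1" using h by simp
  moreover have "0 < 1 / Fs n (\<lambda>k. b (Suc k)) y" using h by simp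
  moreover have "real (b 0) = 1 \<or> real (b 0) = 2" using b0 by auto
  ultimately show ?case unfolding Fs.simps by (elim disjE) linarith+
qed

lemma Fs_lower: "BB b \<Longrightarrow> 1 \<le> y \<Longrightarrow> y \<le> 3 \<Longrightarrow> 4/3 \<le> Fs (Suc n) b y"
proof -
  assume a: "BB b" "1 \<le> y" "y \<le> 3"
  have h: "1 \<le> Fs n (\<lambda>k. b (Suc k)) y \<and> Fs n (\<lambda>k. b (Suc k)) y \<le> 3"
    using a Fs_bounds BB_shift(2) by blast
  have "b 0 = 1 \<or> b 0 = 2" using a by (auto simp: BB_def)
  then have b0: "1 \<le> real (b 0)" by auto
  have "1/3 \<le> 1 / Fs n (\<lambda>k. b (Suc k)) y" using h by (simp add: divide_simps)
  then show ?thesis using b0 by simp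
qed

lemma inv_diff: fixes A C k :: real
  assumes "k > 0" "A \<ge> k" "C \<ge> k"
  shows "\<bar>1/A - 1/C\<bar> \<le> \<bar>A - C\<bar> / k^2"
proof -
  have "1/A - 1/C = (C - A) / (A * C)" using assms by (simp add: field_simps)
  hence "\<bar>1/A - 1/C\<bar> = \<bar>A - C\<bar> / (A * C)" using assms by (simp add: abs_minus_commute)
  also have "\<dots> \<le> \<bar>A - C\<bar> / k^2"
    by (rule divide_left_mono) (use assms in \<open>auto simp: power2_eq_square intro: mult_mono\<close>)
  finally show ?thesis .
qed

lemma Fs_contr: "BB b \<Longrightarrow> 1 \<le> u \<Longrightarrow> u \<le> 3 \<Longrightarrow> 1 \<le> v \<Longrightarrow> v \<le> 3 \<Longrightarrow>
   \<bar>Fs n b u - Fs n b v\<bar> \<le> (9/16)^(n - 1) * \<bar>u - v\<bar>"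
proof (induction n arbitrary: b)
  case 0 then show ?case by simp
next
  case (Suc n)
  let ?c = "\<lambda>k. b (Suc k)"
  have bc: "BB ?c" using Suc BB_shift(2) by blast
  show ?case
  proof (cases n)
    case 0
    have "\<bar>1/u - 1/v\<bar> \<le> \<bar>u - v\<bar> / 1^2" by (rule inv_diff) (use Suc.prems in auto)
    then show ?thesis using 0 by simp
  next
    case (Suc m)
    have A: "4/3 \<le> Fs n ?c u" "4/3 \<le> Fs n ?c v" using Fs_lower[OF bc] Suc Suc.prems by auto
    have "\<bar>1/Fs n ?c u - 1/Fs n ?c v\<bar> \<le> \<bar>Fs n ?c u - Fs n ?c v\<bar> / (4/3)^2"
      by (rule inv_diff) (use A in auto)
    also have "\<dots> \<le> ((9/16)^(n - 1) * \<bar>u - v\<bar>) / (4/3)^2"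
      using Suc.IH[OF bc] Suc.prems by (intro divide_right_mono) auto
    also have "\<dots> = (9/16)^(Suc n - 1) * \<bar>u - v\<bar>" using Suc by (simp add: power2_eq_square)
    finally show ?thesis by simp
  qed
qed

lemma cf_approx_Fs: "cf_approx n b = Fs n b (real (b n))"
  using cf_approx_add[of n 0 b] by simp

lemma cf_approx_bounds: "BB b \<Longrightarrow> 1 \<le> cf_approx n b \<and> cf_approx n b \<le> 3"
proof -
  assume a: "BB b"
  have "b n = 1 \<or> b n = 2" using a by (auto simp: BB_def)
  then show ?thesis unfolding cf_approx_Fs using Fs_bounds[OF a] by fastforce
qed

lemma cf_conv: assumes b: "BB b" shows "(\<lambda>n. cf_approx n b) \<longlonglongrightarrow> cf b"
proof -
  have "Cauchy (\<lambda>n. cf_approx n b)"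
  proof (rule metric_CauchyI)
    fix e :: real assume e: "0 < e"
    obtain N where N: "(9/16::real)^N < e/2" using real_arch_pow_inv[of "e/2" "9/16"] e by auto
    show "\<exists>M. \<forall>m\<ge>M. \<forall>n\<ge>M. dist (cf_approx m b) (cf_approx n b) < e"
    proof (intro exI allI impI)
      fix m n assume m: "Suc N \<le> m" and n: "Suc N \<le> n"
      let ?c = "\<lambda>k. b (k + Suc N)"
      have bc: "BB ?c" using b BB_shift(1) by blast
      have em: "cf_approx m b = Fs (Suc N) b (cf_approx (m - Suc N) ?c)"
        using cf_approx_add[of "Suc N" "m - Suc N" b] m by simp
      have en: "cf_approx n b = Fs (Suc N) b (cf_approx (n - Suc N) ?c)"
        using cf_approx_add[of "Suc N" "n - Suc N" b] n by simp
      have u: "1 \<le> cf_approx (m - Suc N) ?c \<and> cf_approx (m - Suc N) ?c \<le> 3"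
        using cf_approx_bounds[OF bc] by blast
      have v: "1 \<le> cf_approx (n - Suc N) ?c \<and> cf_approx (n - Suc N) ?c \<le> 3"
        using cf_approx_bounds[OF bc] by blast
      have "dist (cf_approx m b) (cf_approx n b)
          \<le> (9/16)^(Suc N - 1) * \<bar>cf_approx (m - Suc N) ?c - cf_approx (n - Suc N) ?c\<bar>"
        unfolding em en dist_real_def using Fs_contr[OF b] u v by blast
      also have "\<dots> \<le> (9/16)^N * 2"
      proof -
        have "\<bar>cf_approx (m - Suc N) ?c - cf_approx (n - Suc N) ?c\<bar> \<le> 2" using u v by linarith
        then show ?thesis by (simp only: diff_Suc_1) (rule mult_left_mono, auto)
      qed
      also have "\<dots> < e" using N by simp
      finally show "dist (cf_approx m b) (cf_approx n b) < e" .
    qed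
  qed
  then show ?thesis unfolding cf_def Cauchy_convergent_iff convergent_LIMSEQ_iff .
qed

lemma cf_bounds: "BB b \<Longrightarrow> 1 \<le> cf b \<and> cf b \<le> 3"
  using cf_conv cf_approx_bounds
  by (meson LIMSEQ_le_const LIMSEQ_le_const2)

lemma cf_rec: assumes b: "BB b" shows "cf b = real (b 0) + 1 / cf (\<lambda>k. b (Suc k))"
proof -
  let ?c = "\<lambda>k. b (Suc k)"
  have bc: "BB ?c" using b BB_shift(2) by blast
  have 1: "(\<lambda>n. cf_approx (Suc n) b) \<longlonglongrightarrow> cf b" using cf_conv[OF b] by (rule LIMSEQ_Suc)
  have "cf ?c \<noteq> 0" using cf_bounds[OF bc] by auto
  then have "(\<lambda>n. real (b 0) + 1 / cf_approx n ?c) \<longlonglongrightarrow> real (b 0) + 1 / cf ?c"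
    by (intro tendsto_intros cf_conv[OF bc])
  then have 2: "(\<lambda>n. cf_approx (Suc n) b) \<longlonglongrightarrow> real (b 0) + 1 / cf ?c" by simp
  show ?thesis using LIMSEQ_unique[OF 1 2] .
qed

lemma cf0_eq: assumes a: "BB a" shows "cf0 a = 1 / cf a"
proof -
  let ?c = "\<lambda>n. if n = 0 then 0 else a (n - 1)"
  have "cf a \<noteq> 0" using cf_bounds[OF a] by auto
  then have "(\<lambda>n. 1 / cf_approx n a) \<longlonglongrightarrow> 1 / cf a"
    by (intro tendsto_intros cf_conv[OF a])
  moreover have "(\<lambda>n. cf_approx (Suc n) ?c) = (\<lambda>n. 1 / cf_approx n a)" by simp
  ultimately have "(\<lambda>n. cf_approx (Suc n) ?c) \<longlonglongrightarrow> 1 / cf a" by simp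
  then have "(\<lambda>n. cf_approx n ?c) \<longlonglongrightarrow> 1 / cf a" by (rule iffD1[OF filterlim_sequentially_Suc])
  then show ?thesis unfolding cf0_def cf_def by (rule limI)
qed



primrec Fl :: "nat list \<Rightarrow> real \<Rightarrow> real" where
  "Fl [] y = y"
| "Fl (a # as) y = real a + 1 / Fl as y"

lemma Fl_append: "Fl (xs @ ys) y = Fl xs (Fl ys y)"
  by (induction xs) simp_all

lemma prepend_Cons: "prepend (a # xs) \<omega> 0 = a" "(\<lambda>k. prepend (a # xs) \<omega> (Suc k)) = prepend xs \<omega>"
  by (auto simp: prepend_def)

lemma prepend_Nil: "prepend [] \<omega> = \<omega>" by (simp add: prepend_def)

lemma prepend_append: "prepend (xs @ ys) \<omega> = prepend xs (prepend ys \<omega>)"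
  by (rule ext) (auto simp: prepend_def nth_append)

lemma prepend_cf: "BB \<omega> \<Longrightarrow> set xs \<subseteq> {1, 2} \<Longrightarrow> BB (prepend xs \<omega>) \<and> cf (prepend xs \<omega>) = Fl xs (cf \<omega>)"
proof (induction xs)
  case Nil then show ?case by (simp add: prepend_Nil)
next
  case (Cons a xs)
  then have ih: "BB (prepend xs \<omega>)" "cf (prepend xs \<omega>) = Fl xs (cf \<omega>)" by auto
  have bb: "BB (prepend (a # xs) \<omega>)"
    unfolding BB_def
  proof
    fix n show "prepend (a # xs) \<omega> n \<in> {1, 2}"
    proof (cases n)
      case 0 then show ?thesis using Cons.prems prepend_Cons(1)[of a xs \<omega>] by auto
    next
      case (Suc k)
      have "prepend (a # xs) \<omega> (Suc k) = prepend xs \<omega> k" using prepend_Cons(2)[of a xs \<omega>] by metis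
      then show ?thesis using ih(1) Suc by (simp add: BB_def)
    qed
  qed
  show ?case using cf_rec[OF bb] ih bb by (simp add: prepend_Cons)
qed

lemma Fl_ge1: "set as \<subseteq> {1, 2} \<Longrightarrow> 1 \<le> y \<Longrightarrow> 1 \<le> Fl as y"
proof (induction as)
  case Nil then show ?case by simp
next
  case (Cons a as)
  then have "1 \<le> Fl as y" "1 \<le> real a" by auto
  moreover have "0 < 1 / Fl as y" using calculation by simp
  ultimately show ?case unfolding Fl.simps by linarith
qed

lemma Fl_mono: "set as \<subseteq> {1, 2} \<Longrightarrow> 1 \<le> y \<Longrightarrow> y \<le> z \<Longrightarrow>
   (even (length as) \<longrightarrow> Fl as y \<le> Fl as z) \<and> (odd (length as) \<longrightarrow> Fl as z \<le> Fl as y)"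
proof (induction as)
  case Nil then show ?case by simp
next
  case (Cons a as)
  then have ih: "(even (length as) \<longrightarrow> Fl as y \<le> Fl as z) \<and> (odd (length as) \<longrightarrow> Fl as z \<le> Fl as y)"
    by auto
  have p: "1 \<le> Fl as y" "1 \<le> Fl as z" using Fl_ge1 Cons.prems by auto
  show ?case
  proof (cases "even (length as)")
    case True
    then have "1 / Fl as z \<le> 1 / Fl as y" using ih p by (intro divide_left_mono) auto
    then show ?thesis using True by simp
  next
    case False
    then have "1 / Fl as y \<le> 1 / Fl as z" using ih p by (intro divide_left_mono) auto
    then show ?thesis using False by simp
  qed
qed

lemma Fl_lip: "set as \<subseteq> {1, 2} \<Longrightarrow> 1 \<le> y \<Longrightarrow> 1 \<le> z \<Longrightarrow> \<bar>Fl as y - Fl as z\<bar> \<le> \<bar>y - z\<bar>"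
proof (induction as)
  case Nil then show ?case by simp
next
  case (Cons a as)
  then have ih: "\<bar>Fl as y - Fl as z\<bar> \<le> \<bar>y - z\<bar>" by auto
  have p: "1 \<le> Fl as y" "1 \<le> Fl as z" using Fl_ge1 Cons.prems by auto
  have "\<bar>1 / Fl as y - 1 / Fl as z\<bar> \<le> \<bar>Fl as y - Fl as z\<bar> / 1^2" by (rule inv_diff) (use p in auto)
  then show ?case using ih by simp
qed



lemma g0: "(\<lambda>n. gamma \<beta> \<theta> \<omega>1 \<omega>2 (0 + int n)) = prepend (2 # \<theta> @ 2 # \<beta>) \<omega>1"
proof (rule ext)
  fix n :: nat
  let ?L = "length \<theta>" and ?p = "length \<beta>"
  consider "n = 0" | "1 \<le> n \<and> n \<le> ?L" | "n = ?L + 1" | "?L + 1 < n \<and> n \<le> ?L + 1 + ?p" | "?L + 1 + ?p < n"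
    by linarith
  then show "gamma \<beta> \<theta> \<omega>1 \<omega>2 (0 + int n) = prepend (2 # \<theta> @ 2 # \<beta>) \<omega>1 n"
  proof cases
    case 1 then show ?thesis by (simp add: gamma_def prepend_def)
  next
    case 2
    have a: "gamma \<beta> \<theta> \<omega>1 \<omega>2 (0 + int n) = \<theta> ! (n - 1)"
      using 2 by (simp add: gamma_def Let_def nat_diff_distrib)
    have b: "prepend (2 # \<theta> @ 2 # \<beta>) \<omega>1 n = \<theta> ! (n - 1)"
      using 2 by (cases n) (simp_all add: prepend_def nth_append)
    show ?thesis using a b by simp
  next
    case 3
    have a: "gamma \<beta> \<theta> \<omega>1 \<omega>2 (0 + int n) = 2"
      using 3 by (simp add: gamma_def Let_def)
    have b: "prepend (2 # \<theta> @ 2 # \<beta>) \<omega>1 n = 2"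
      using 3 by (simp add: prepend_def nth_append)
    show ?thesis using a b by simp
  next
    case 4
    have a: "gamma \<beta> \<theta> \<omega>1 \<omega>2 (0 + int n) = \<beta> ! (n - ?L - 2)"
      using 4 by (simp add: gamma_def Let_def nat_diff_distrib)
    have b: "prepend (2 # \<theta> @ 2 # \<beta>) \<omega>1 n = \<beta> ! (n - ?L - 2)"
      using 4 by (cases n) (simp_all add: prepend_def nth_append nth_Cons' numeral_2_eq_2)
    show ?thesis using a b by simp
  next
    case 5
    have a: "gamma \<beta> \<theta> \<omega>1 \<omega>2 (0 + int n) = \<omega>1 (n - ?L - 2 - ?p)"
      using 5 by (simp add: gamma_def Let_def nat_diff_distrib)
    have b: "prepend (2 # \<theta> @ 2 # \<beta>) \<omega>1 n = \<omega>1 (n - ?L - 2 - ?p)"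
      using 5 by (simp add: prepend_def)
    show ?thesis using a b by simp
  qed
qed

lemma gm: "(\<lambda>n. gamma \<beta> \<theta> \<omega>1 \<omega>2 (0 - 1 - int n)) = prepend \<beta> \<omega>2"
proof (rule ext)
  fix n :: nat
  show "gamma \<beta> \<theta> \<omega>1 \<omega>2 (0 - 1 - int n) = prepend \<beta> \<omega>2 n"
  proof (cases "n < length \<beta>")
    case True
    have a: "gamma \<beta> \<theta> \<omega>1 \<omega>2 (0 - 1 - int n) = \<beta> ! n"
      using True by (simp add: gamma_def Let_def)
    show ?thesis using a True by (simp add: prepend_def)
  next
    case False
    have a: "gamma \<beta> \<theta> \<omega>1 \<omega>2 (0 - 1 - int n) = \<omega>2 (n - length \<beta>)"
      using False by (simp add: gamma_def Let_def nat_diff_distrib)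
    show ?thesis using a False by (simp add: prepend_def)
  qed
qed

lemma gL: "(\<lambda>n. gamma \<beta> \<theta> \<omega>1 \<omega>2 (int (length \<theta>) + 1 + int n)) = prepend (2 # \<beta>) \<omega>1"
proof (rule ext)
  fix n :: nat
  let ?L = "length \<theta>" and ?p = "length \<beta>"
  consider "n = 0" | "1 \<le> n \<and> n \<le> ?p" | "?p < n" by linarith
  then show "gamma \<beta> \<theta> \<omega>1 \<omega>2 (int ?L + 1 + int n) = prepend (2 # \<beta>) \<omega>1 n"
  proof cases
    case 1 then show ?thesis by (simp add: gamma_def Let_def prepend_def)
  next
    case 2
    have a: "gamma \<beta> \<theta> \<omega>1 \<omega>2 (int ?L + 1 + int n) = \<beta> ! (n - 1)"
      using 2 by (simp add: gamma_def Let_def nat_diff_distrib)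
    have b: "prepend (2 # \<beta>) \<omega>1 n = \<beta> ! (n - 1)"
      using 2 by (cases n) (simp_all add: prepend_def)
    show ?thesis using a b by simp
  next
    case 3
    have a: "gamma \<beta> \<theta> \<omega>1 \<omega>2 (int ?L + 1 + int n) = \<omega>1 (n - 1 - ?p)"
      using 3 by (simp add: gamma_def Let_def nat_diff_distrib)
    have b: "prepend (2 # \<beta>) \<omega>1 n = \<omega>1 (n - 1 - ?p)"
      using 3 by (simp add: prepend_def)
    show ?thesis using a b by simp
  qed
qed

lemma gLm: assumes sym: "\<forall>j < length \<theta>. \<theta> ! j = \<theta> ! (length \<theta> - 1 - j)"
  shows "(\<lambda>n. gamma \<beta> \<theta> \<omega>1 \<omega>2 (int (length \<theta>) + 1 - 1 - int n)) = prepend (\<theta> @ 2 # \<beta>) \<omega>2"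
proof (rule ext)
  fix n :: nat
  let ?L = "length \<theta>" and ?p = "length \<beta>"
  consider "n < ?L" | "n = ?L" | "?L < n \<and> n \<le> ?L + ?p" | "?L + ?p < n" by linarith
  then show "gamma \<beta> \<theta> \<omega>1 \<omega>2 (int ?L + 1 - 1 - int n) = prepend (\<theta> @ 2 # \<beta>) \<omega>2 n"
  proof cases
    case 1
    have e: "nat (int ?L - int n - 1) = ?L - 1 - n" using 1 by linarith
    have a: "gamma \<beta> \<theta> \<omega>1 \<omega>2 (int ?L + 1 - 1 - int n) = \<theta> ! (?L - 1 - n)"
      using 1 e by (simp add: gamma_def Let_def)
    have b: "prepend (\<theta> @ 2 # \<beta>) \<omega>2 n = \<theta> ! n"
      using 1 by (simp add: prepend_def nth_append)
    have "\<theta> ! n = \<theta> ! (?L - 1 - n)" using sym 1 by blast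
    then show ?thesis using a b by simp
  next
    case 2 then show ?thesis by (simp add: gamma_def Let_def prepend_def nth_append)
  next
    case 3
    have a: "gamma \<beta> \<theta> \<omega>1 \<omega>2 (int ?L + 1 - 1 - int n) = \<beta> ! (n - ?L - 1)"
      using 3 by (simp add: gamma_def Let_def nat_diff_distrib)
    have b: "prepend (\<theta> @ 2 # \<beta>) \<omega>2 n = \<beta> ! (n - ?L - 1)"
      using 3 by (simp add: prepend_def nth_append nth_Cons')
    show ?thesis using a b by simp
  next
    case 4
    have a: "gamma \<beta> \<theta> \<omega>1 \<omega>2 (int ?L + 1 - 1 - int n) = \<omega>2 (n - ?L - 1 - ?p)"
      using 4 by (simp add: gamma_def Let_def nat_diff_distrib)
    have b: "prepend (\<theta> @ 2 # \<beta>) \<omega>2 n = \<omega>2 (n - ?L - 1 - ?p)"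
      using 4 by (simp add: prepend_def)
    show ?thesis using a b by simp
  qed
qed



lemma BB_prepend: "BB \<omega> \<Longrightarrow> set xs \<subseteq> {1, 2} \<Longrightarrow> BB (prepend xs \<omega>)"
  using prepend_cf by blast

lemma cf_prepend: "BB \<omega> \<Longrightarrow> set xs \<subseteq> {1, 2} \<Longrightarrow> cf (prepend xs \<omega>) = Fl xs (cf \<omega>)"
  using prepend_cf by blast

lemma lam_vals:
  assumes beta_alph: "set \<beta> \<subseteq> {1, 2}" and theta_alph: "set \<theta> \<subseteq> {1, 2}"
    and sym: "\<forall>j < length \<theta>. \<theta> ! j = \<theta> ! (length \<theta> - 1 - j)"
    and b1: "BB \<omega>1" and b2: "BB \<omega>2"
  shows "lam 0 (gamma \<beta> \<theta> \<omega>1 \<omega>2) = 2 + 1 / Fl \<theta> (2 + cf0 (prepend \<beta> \<omega>1)) + cf0 (prepend \<beta> \<omega>2)"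
    and "lam (int (length \<theta>) + 1) (gamma \<beta> \<theta> \<omega>1 \<omega>2) = 2 + cf0 (prepend \<beta> \<omega>1) + 1 / Fl \<theta> (2 + cf0 (prepend \<beta> \<omega>2))"
proof -
  let ?P1 = "prepend \<beta> \<omega>1" and ?P2 = "prepend \<beta> \<omega>2"
  have P1: "BB ?P1" and P2: "BB ?P2" using BB_prepend beta_alph b1 b2 by auto
  have x1: "cf0 ?P1 = 1 / cf ?P1" and x2: "cf0 ?P2 = 1 / cf ?P2" using cf0_eq P1 P2 by auto
  have s1: "set (2 # \<theta> @ [2]) \<subseteq> {1, 2}" and s2: "set (\<theta> @ [2]) \<subseteq> {1, 2}" and s3: "set [2::nat] \<subseteq> {1,2}"
    using theta_alph by auto
  have e1: "prepend (2 # \<theta> @ 2 # \<beta>) \<omega>1 = prepend (2 # \<theta> @ [2]) ?P1"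
    using prepend_append[of "2 # \<theta> @ [2]" \<beta> \<omega>1] by simp
  have "lam 0 (gamma \<beta> \<theta> \<omega>1 \<omega>2) = cf (prepend (2 # \<theta> @ 2 # \<beta>) \<omega>1) + cf0 ?P2"
    unfolding lam_def using g0[of \<beta> \<theta> \<omega>1 \<omega>2] gm[of \<beta> \<theta> \<omega>1 \<omega>2] by simp
  also have "cf (prepend (2 # \<theta> @ 2 # \<beta>) \<omega>1) = Fl (2 # \<theta> @ [2]) (cf ?P1)"
    unfolding e1 by (rule cf_prepend[OF P1 s1])
  finally show "lam 0 (gamma \<beta> \<theta> \<omega>1 \<omega>2) = 2 + 1 / Fl \<theta> (2 + cf0 ?P1) + cf0 ?P2"
    using x1 by (simp add: Fl_append)
  have e2: "prepend (2 # \<beta>) \<omega>1 = prepend [2] ?P1"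
    using prepend_append[of "[2]" \<beta> \<omega>1] by simp
  have e3: "prepend (\<theta> @ 2 # \<beta>) \<omega>2 = prepend (\<theta> @ [2]) ?P2"
    using prepend_append[of "\<theta> @ [2]" \<beta> \<omega>2] by simp
  have B3: "BB (prepend (\<theta> @ [2]) ?P2)" using BB_prepend[OF P2 s2] .
  have "lam (int (length \<theta>) + 1) (gamma \<beta> \<theta> \<omega>1 \<omega>2) = cf (prepend (2 # \<beta>) \<omega>1) + cf0 (prepend (\<theta> @ 2 # \<beta>) \<omega>2)"
    unfolding lam_def using gL[of \<beta> \<theta> \<omega>1 \<omega>2] gLm[OF sym, of \<beta> \<omega>1 \<omega>2] by simp
  also have "cf (prepend (2 # \<beta>) \<omega>1) = Fl [2] (cf ?P1)"
    unfolding e2 by (rule cf_prepend[OF P1 s3])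
  also have "cf0 (prepend (\<theta> @ 2 # \<beta>) \<omega>2) = 1 / Fl (\<theta> @ [2]) (cf ?P2)"
    unfolding e3 using cf0_eq[OF B3] cf_prepend[OF P2 s2] by simp
  finally show "lam (int (length \<theta>) + 1) (gamma \<beta> \<theta> \<omega>1 \<omega>2) = 2 + cf0 ?P1 + 1 / Fl \<theta> (2 + cf0 ?P2)"
    using x1 x2 by (simp add: Fl_append)
qed

lemma cf0_range: "BB \<omega> \<Longrightarrow> set \<beta> \<subseteq> {1, 2} \<Longrightarrow> 0 < cf0 (prepend \<beta> \<omega>) \<and> cf0 (prepend \<beta> \<omega>) \<le> 1"
proof -
  assume a: "BB \<omega>" "set \<beta> \<subseteq> {1, 2}"
  then have P: "BB (prepend \<beta> \<omega>)" by (rule BB_prepend)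
  show ?thesis using cf0_eq[OF P] cf_bounds[OF P] by simp
qed

theorem lemma2p1:
  fixes \<beta> \<theta> :: "nat list" and r :: nat and S :: "(nat \<Rightarrow> nat) set"
  assumes beta_alph: "set \<beta> \<subseteq> {1, 2}"
    and theta_alph: "set \<theta> \<subseteq> {1, 2}"
    and r_pos: "r \<ge> 1"
    and theta_len: "length \<theta> = 2 * r"
    and theta_sym: "\<forall>j < 2 * r. \<theta> ! j = \<theta> ! (2 * r - 1 - j)"
    and S_alph: "\<forall>\<omega> \<in> S. \<forall>n. \<omega> n \<in> {1, 2}"
    and S_max: "\<forall>\<omega>1 \<in> S. \<forall>\<omega>2 \<in> S.
        markov (gamma \<beta> \<theta> \<omega>1 \<omega>2)
          = max (lam 0 (gamma \<beta> \<theta> \<omega>1 \<omega>2)) (lam (2 * int r + 1) (gamma \<beta> \<theta> \<omega>1 \<omega>2))"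
  shows "(\<forall>\<omega>1 \<in> S. \<forall>\<omega>2 \<in> S.
            markov (gamma \<beta> \<theta> \<omega>1 \<omega>2)
              \<ge> max (markov (gamma \<beta> \<theta> \<omega>1 \<omega>1)) (markov (gamma \<beta> \<theta> \<omega>2 \<omega>2)))
       \<and> (\<forall>\<omega> \<in> S. \<forall>\<omega>' \<in> S.
            cf0 (prepend \<beta> \<omega>) \<le> cf0 (prepend \<beta> \<omega>')
              \<longrightarrow> markov (gamma \<beta> \<theta> \<omega> \<omega>) \<le> markov (gamma \<beta> \<theta> \<omega>' \<omega>'))"
proof -
  have sym: "\<forall>j < length \<theta>. \<theta> ! j = \<theta> ! (length \<theta> - 1 - j)" unfolding theta_len using theta_sym .
  have ev: "even (length \<theta>)" using theta_len by simp
  have k: "2 * int r + 1 = int (length \<theta>) + 1" using theta_len by simp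
  define h where "h = (\<lambda>x::real. 1 / Fl \<theta> (2 + x))"
  define X where "X = (\<lambda>\<omega>. cf0 (prepend \<beta> \<omega>))"
  have BS: "\<And>\<omega>. \<omega> \<in> S \<Longrightarrow> BB \<omega>" using S_alph by (simp add: BB_def)
  have Xr: "\<And>\<omega>. \<omega> \<in> S \<Longrightarrow> 0 < X \<omega> \<and> X \<omega> \<le> 1" unfolding X_def using cf0_range BS beta_alph by blast
  have mk: "\<And>\<omega>1 \<omega>2. \<omega>1 \<in> S \<Longrightarrow> \<omega>2 \<in> S \<Longrightarrow>
     markov (gamma \<beta> \<theta> \<omega>1 \<omega>2) = max (2 + h (X \<omega>1) + X \<omega>2) (2 + X \<omega>1 + h (X \<omega>2))"
    using S_max lam_vals[OF beta_alph theta_alph sym BS BS] unfolding k h_def X_def by simp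
  have hmono: "h y \<le> h x" if "0 < x" "x \<le> y" for x y
  proof -
    have "Fl \<theta> (2 + x) \<le> Fl \<theta> (2 + y)" using Fl_mono[OF theta_alph, of "2 + x" "2 + y"] that ev by simp
    moreover have "1 \<le> Fl \<theta> (2 + x)" using Fl_ge1[OF theta_alph] that by simp
    ultimately show ?thesis unfolding h_def by (intro divide_left_mono) auto
  qed
  have hlip: "h x - h y \<le> y - x" if "0 < x" "x \<le> y" for x y
  proof -
    have A: "1 \<le> Fl \<theta> (2 + x)" "1 \<le> Fl \<theta> (2 + y)" using Fl_ge1[OF theta_alph] that by auto
    have "\<bar>h x - h y\<bar> \<le> \<bar>Fl \<theta> (2 + x) - Fl \<theta> (2 + y)\<bar> / 1^2"
      unfolding h_def by (rule inv_diff) (use A in auto)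
    also have "\<dots> \<le> \<bar>(2 + x) - (2 + y)\<bar>" using Fl_lip[OF theta_alph, of "2 + x" "2 + y"] that by simp
    finally show ?thesis using that by simp
  qed
  show ?thesis
  proof (intro conjI ballI impI)
    fix \<omega>1 \<omega>2 assume s: "\<omega>1 \<in> S" "\<omega>2 \<in> S"
    have r1: "0 < X \<omega>1" "0 < X \<omega>2" using Xr s by auto
    show "max (markov (gamma \<beta> \<theta> \<omega>1 \<omega>1)) (markov (gamma \<beta> \<theta> \<omega>2 \<omega>2)) \<le> markov (gamma \<beta> \<theta> \<omega>1 \<omega>2)"
    proof (cases "X \<omega>1 \<le> X \<omega>2")
      case True
      have "h (X \<omega>2) \<le> h (X \<omega>1)" using hmono r1 True by blast
      then show ?thesis unfolding mk[OF s(1) s(1)] mk[OF s(2) s(2)] mk[OF s] using True by auto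
    next
      case False
      have "h (X \<omega>1) \<le> h (X \<omega>2)" using hmono r1 False by auto
      then show ?thesis unfolding mk[OF s(1) s(1)] mk[OF s(2) s(2)] mk[OF s] using False by auto
    qed
  next
    fix \<omega> \<omega>' assume s: "\<omega> \<in> S" "\<omega>' \<in> S" and le: "cf0 (prepend \<beta> \<omega>) \<le> cf0 (prepend \<beta> \<omega>')"
    have le': "X \<omega> \<le> X \<omega>'" using le unfolding X_def .
    have "h (X \<omega>) - h (X \<omega>') \<le> X \<omega>' - X \<omega>" using hlip Xr s le' by blast
    then show "markov (gamma \<beta> \<theta> \<omega> \<omega>) \<le> markov (gamma \<beta> \<theta> \<omega>' \<omega>')"
      unfolding mk[OF s(1) s(1)] mk[OF s(2) s(2)] by auto
  qed
qed


end
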